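(* Let $q$ be a prime power and let $n,k$ be integers with $3\le k\le n-2\le q-2$. Let $\alpha_1,\dots,\alpha_n\in\mathbb{F}_q$ be pairwise distinct. Let $C_{k-1,k-2}$ be the linear code over $\mathbb{F}_q$ generated by the $k\times n$ matrix $G_{k-1,k-2}$ whose rows are $(\alpha_1^{e},\alpha_2^{e},\dots,\alpha_n^{e})$ for $e=0,1,\dots,k-3,k,k+1$ (in this order). Then $C_{k-1,k-2}$ is an $[n,k,d]$ linear code with $d\in\{n-k-1,\,n-k,\,n-k+1\}$.
   Context: Convention: $0^0=1$. An $[n,k,d]$ code is a linear code of length $n$, dimension $k$ and minimum Hamming distance $d$. *)

theory Defs
  imports "HOL-Analysis.Analysis"
begin

text \<open>Hamming weight of a vector of length CARD('n).\<close>
definition hamming_weight :: "'a::zero ^ 'n \<Rightarrow> nat" where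
  "hamming_weight c = card {i. c $ i \<noteq> 0}"

text \<open>Minimum Hamming distance of a linear code C (a subspace): minimum weight
  of its nonzero codewords (= minimum distance between distinct codewords).\<close>
definition min_distance :: "('a::zero ^ 'n) set \<Rightarrow> nat" where
  "min_distance C = Min (hamming_weight ` (C - {0}))"

text \<open>Exponents of the rows of G_{k-1,k-2}: 0,1,...,k-3,k,k+1 (in this order).\<close>
definition gen_exps :: "nat \<Rightarrow> nat list" where
  "gen_exps k = [0..<k-2] @ [k, k+1]"

text \<open>Row j (0-based, j < k) of the k x n generator matrix G_{k-1,k-2}.\<close>
definition gen_row :: "('n \<Rightarrow> 'a::field) \<Rightarrow> nat \<Rightarrow> nat \<Rightarrow> 'a ^ 'n" where
  "gen_row \<alpha> k j = (\<chi> i. \<alpha> i ^ (gen_exps k ! j))"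

text \<open>The code C_{k-1,k-2}: the row space of G_{k-1,k-2}.\<close>
definition code_C :: "('n \<Rightarrow> 'a::field) \<Rightarrow> nat \<Rightarrow> ('a ^ 'n) set" where
  "code_C \<alpha> k = vec.span (gen_row \<alpha> k ` {..<k})"

end

theory Submission imports Defs "HOL-Computational_Algebra.Polynomial" begin
lemma gen_exps_len: "2 \<le> k \<Longrightarrow> length (gen_exps k) = k"
  by (simp add: gen_exps_def)

lemma gen_exps_le: assumes "2 \<le> k" "j < k" shows "gen_exps k ! j \<le> k + 1"
proof (cases "j < k - 2")
  case True then show ?thesis by (simp add: gen_exps_def nth_append)
next
  case False
  then have "j - (k - 2) = 0 \<or> j - (k - 2) = 1" using assms by linarith
  then show ?thesis using False by (auto simp: gen_exps_def nth_append)
qed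

lemma gen_exps_distinct: "distinct (gen_exps k)"
  by (simp add: gen_exps_def)

lemma gen_exps_inj: "2 \<le> k \<Longrightarrow> inj_on (\<lambda>j. gen_exps k ! j) {..<k}"
  using gen_exps_distinct[of k] gen_exps_len[of k]
  by (simp add: inj_on_def distinct_conv_nth) blast
definition Pc :: "nat \<Rightarrow> (nat \<Rightarrow> 'a::field) \<Rightarrow> 'a poly" where
  "Pc k c = (\<Sum>j<k. monom (c j) (gen_exps k ! j))"

lemma poly_Pc: "poly (Pc k c) x = (\<Sum>j<k. c j * x ^ (gen_exps k ! j))"
  by (simp add: Pc_def poly_sum poly_monom)

lemma degree_Pc: "2 \<le> k \<Longrightarrow> degree (Pc k c) \<le> k + 1"
  unfolding Pc_def
proof (rule degree_sum_le)
  fix j assume "2 \<le> k" "j \<in> {..<k}"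
  then have "gen_exps k ! j \<le> k + 1" using gen_exps_le by simp
  then show "degree (monom (c j) (gen_exps k ! j)) \<le> k + 1"
    using degree_monom_le[of "c j" "gen_exps k ! j"] by linarith
qed simp

lemma coeff_Pc: assumes "2 \<le> k" "j < k" shows "coeff (Pc k c) (gen_exps k ! j) = c j"
proof -
  have "coeff (Pc k c) (gen_exps k ! j) = (\<Sum>t<k. if gen_exps k ! t = gen_exps k ! j then c t else 0)"
    by (simp add: Pc_def coeff_sum coeff_monom)
  also have "\<dots> = (\<Sum>t<k. if t = j then c t else 0)"
    using gen_exps_inj[OF assms(1)] assms(2) by (intro sum.cong) (auto simp: inj_on_def)
  also have "\<dots> = c j" using assms by simp
  finally show ?thesis .
qed

lemma roots_bound:
  fixes \<alpha> :: "'n::finite \<Rightarrow> 'a::field"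
  assumes "inj \<alpha>" "Pc k c \<noteq> 0" "2 \<le> k"
  shows "card {i. poly (Pc k c) (\<alpha> i) = 0} \<le> k + 1"
proof -
  have "card {i. poly (Pc k c) (\<alpha> i) = 0} = card (\<alpha> ` {i. poly (Pc k c) (\<alpha> i) = 0})"
    using assms(1) by (simp add: card_image inj_on_subset)
  also have "\<dots> \<le> card {x. poly (Pc k c) x = 0}"
    by (rule card_mono) (auto intro: poly_roots_finite[OF assms(2)])
  also have "\<dots> \<le> degree (Pc k c)" by (rule card_poly_roots_bound[OF assms(2)])
  also have "\<dots> \<le> k + 1" by (rule degree_Pc[OF assms(3)])
  finally show ?thesis .
qed

lemma all_zero:
  fixes \<alpha> :: "'n::finite \<Rightarrow> 'a::field"
  assumes "inj \<alpha>" "2 \<le> k" "k + 2 \<le> CARD('n)" "\<forall>i. poly (Pc k c) (\<alpha> i) = 0" "j < k"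
  shows "c j = 0"
proof -
  have "Pc k c = 0"
  proof (rule ccontr)
    assume "Pc k c \<noteq> 0"
    from roots_bound[OF assms(1) this assms(2)] assms(3,4) show False by simp
  qed
  then show ?thesis using coeff_Pc[OF assms(2,5), of c] by simp
qed

lemma comb_component:
  "(\<Sum>j<k. c j *s gen_row \<alpha> k j) $ i = poly (Pc k c) (\<alpha> i)"
  by (simp add: poly_Pc gen_row_def)

lemma gen_row_inj:
  fixes \<alpha> :: "'n::finite \<Rightarrow> 'a::field"
  assumes "inj \<alpha>" "2 \<le> k" "k + 2 \<le> CARD('n)"
  shows "inj_on (gen_row \<alpha> k) {..<k}"
proof (rule inj_onI, rule ccontr)
  fix j j' assume j: "j \<in> {..<k}" "j' \<in> {..<k}" "gen_row \<alpha> k j = gen_row \<alpha> k j'" "j \<noteq> j'"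
  define c :: "nat \<Rightarrow> 'a" where "c = (\<lambda>t. if t = j then 1 else if t = j' then -1 else 0)"
  have "(\<Sum>t<k. c t *s gen_row \<alpha> k t) = (\<Sum>t<k. (if t = j then gen_row \<alpha> k j else 0) - (if t = j' then gen_row \<alpha> k j' else 0))"
    using j(4) by (intro sum.cong) (auto simp: c_def)
  also have "\<dots> = 0" using j by (simp add: sum_subtractf)
  finally have "\<forall>i. poly (Pc k c) (\<alpha> i) = 0" using comb_component[where c=c and k=k and \<alpha>=\<alpha>] by (metis zero_index)
  from all_zero[OF assms this, of j] j show False by (simp add: c_def)
qed

lemma code_repr:
  fixes \<alpha> :: "'n::finite \<Rightarrow> 'a::field"
  assumes "inj \<alpha>" "2 \<le> k" "k + 2 \<le> CARD('n)"
  shows "code_C \<alpha> k = range (\<lambda>c. \<Sum>j<k. c j *s gen_row \<alpha> k j)"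
proof -
  have "code_C \<alpha> k = range (\<lambda>u. \<Sum>v\<in>gen_row \<alpha> k ` {..<k}. u v *s v)"
    unfolding code_C_def by (rule vec.span_finite) simp
  also have "\<dots> = range (\<lambda>c. \<Sum>j<k. c j *s gen_row \<alpha> k j)"
  proof safe
    fix u show "(\<Sum>v\<in>gen_row \<alpha> k ` {..<k}. u v *s v) \<in> range (\<lambda>c. \<Sum>j<k. c j *s gen_row \<alpha> k j)"
      by (rule image_eqI[of _ _ "\<lambda>j. u (gen_row \<alpha> k j)"])
         (simp_all add: sum.reindex[OF gen_row_inj[OF assms]])
  next
    fix c
    obtain h where h: "\<And>j. j \<in> {..<k} \<Longrightarrow> h (gen_row \<alpha> k j) = j"
      using gen_row_inj[OF assms] by (metis the_inv_into_f_f)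
    show "(\<Sum>j<k. c j *s gen_row \<alpha> k j) \<in> range (\<lambda>u. \<Sum>v\<in>gen_row \<alpha> k ` {..<k}. u v *s v)"
      by (rule image_eqI[of _ _ "\<lambda>v. c (h v)"])
         (simp_all add: sum.reindex[OF gen_row_inj[OF assms]] h)
  qed
  finally show ?thesis .
qed


lemma singleton_part:
  fixes \<alpha> :: "'n::finite \<Rightarrow> 'a::{finite,field}"
  assumes inj: "inj \<alpha>" and k2: "2 \<le> k" and kn: "k + 2 \<le> CARD('n)"
    and dimk: "vec.dim (gen_row \<alpha> k ` {..<k}) = k"
  shows "\<exists>w \<in> code_C \<alpha> k - {0}. hamming_weight w \<le> CARD('n) - k + 1"
proof -
  let ?G = "gen_row \<alpha> k ` {..<k}"
  have "k - 1 \<le> card (UNIV :: 'n set)" using kn by simp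
  then obtain T :: "'n set" where T0: "card T = k - 1" by (meson obtain_subset_with_card_n)
  have T: "card T = k - 1" "finite T" using T0 by auto
  define f :: "'a ^ 'n \<Rightarrow> 'a ^ 'n" where "f = (\<lambda>w. \<chi> i. if i \<in> T then w $ i else 0)"
  have lin: "Vector_Spaces.linear (*s) (*s) f"
    unfolding Vector_Spaces.linear_iff
    by (auto simp: vec.vector_space_axioms f_def vec_eq_iff)
  have fspan: "f w \<in> vec.span (range (\<lambda>i. axis i (1::'a)) \<inter> (\<lambda>i. axis i 1) ` T)" for w
  proof -
    have "f w = (\<Sum>i\<in>T. (w $ i) *s axis i 1)"
      by (simp add: f_def vec_eq_iff axis_def T(2) cond_component if_distrib[of "\<lambda>x. _ * x"] cong: if_cong)
    also have "\<dots> \<in> vec.span (range (\<lambda>i. axis i (1::'a)) \<inter> (\<lambda>i. axis i 1) ` T)"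
      by (intro vec.span_sum vec.span_scale vec.span_base) auto
    finally show ?thesis .
  qed
  have "\<not> inj_on f (vec.span ?G)"
  proof
    assume "inj_on f (vec.span ?G)"
    from vec.dim_image_eq[OF lin this] dimk have "vec.dim (f ` ?G) = k" by simp
    moreover have "vec.dim (f ` ?G) \<le> card (range (\<lambda>i. axis i (1::'a)) \<inter> (\<lambda>i. axis i 1) ` T)"
      by (rule vec.dim_le_card) (use fspan T(2) in auto)
    moreover have "card (range (\<lambda>i. axis i (1::'a)) \<inter> (\<lambda>i. axis i 1) ` T) \<le> card T"
      by (rule order.trans[OF card_mono card_image_le]) (use T(2) in auto)
    ultimately show False using T k2 by linarith
  qed
  then obtain x y where xy: "x \<in> code_C \<alpha> k" "y \<in> code_C \<alpha> k" "x \<noteq> y" "f x = f y"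
    unfolding inj_on_def code_C_def by blast
  define w where "w = x - y"
  have w: "w \<in> code_C \<alpha> k" "w \<noteq> 0" using xy by (auto simp: w_def code_C_def vec.span_diff)
  have "w $ i = 0" if "i \<in> T" for i
  proof -
    have "f x $ i = f y $ i" using xy(4) by simp
    then show ?thesis using that by (simp add: f_def w_def)
  qed
  then have "{i. w $ i \<noteq> 0} \<subseteq> UNIV - T" by auto
  then have "card {i. w $ i \<noteq> 0} \<le> card (UNIV - T)" by (intro card_mono) auto
  also have "\<dots> = CARD('n) - (k - 1)" using T by (simp add: card_Diff_subset)
  finally show ?thesis using w k2 unfolding hamming_weight_def by (intro bexI[of _ w]) auto
qed


theorem theorem3p1:
  fixes \<alpha> :: "'n::finite \<Rightarrow> 'a::{finite,field}"
    and n k q :: nat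
  assumes "q = CARD('a)" and "n = CARD('n)"
    and "3 \<le> k" and "k \<le> n - 2" and "n - 2 \<le> q - 2"
    and "inj \<alpha>"
  shows "vec.dim (code_C \<alpha> k) = k \<and>
         min_distance (code_C \<alpha> k) \<in> {n - k - 1, n - k, n - k + 1}"
proof -
  have k2: "2 \<le> k" using assms(3) by simp
  have kn: "k + 2 \<le> CARD('n)" using assms(2,3,4) by linarith
  note inj = assms(6)
  let ?g = "gen_row \<alpha> k"
  have ind: "vec.independent (?g ` {..<k})"
  proof (rule vec.independent_if_scalars_zero)
    show "finite (?g ` {..<k})" by simp
  next
    fix u x assume sum0: "(\<Sum>x\<in>?g ` {..<k}. u x *s x) = 0" and x: "x \<in> ?g ` {..<k}"
    have "(\<Sum>j<k. (u \<circ> ?g) j *s ?g j) = 0"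
      using sum0 by (simp add: sum.reindex[OF gen_row_inj[OF inj k2 kn]])
    then have "\<forall>i. poly (Pc k (u \<circ> ?g)) (\<alpha> i) = 0"
      using comb_component[where c="u \<circ> ?g" and k=k and \<alpha>=\<alpha>] by (metis zero_index)
    from all_zero[OF inj k2 kn this] x show "u x = 0" by auto
  qed
  have dimk: "vec.dim (?g ` {..<k}) = k"
    using vec.dim_span_eq_card_independent[OF ind] card_image[OF gen_row_inj[OF inj k2 kn]]
    by (simp)
  have dimC: "vec.dim (code_C \<alpha> k) = k" unfolding code_C_def using dimk by simp
  have lower: "n - k - 1 \<le> hamming_weight w" if w: "w \<in> code_C \<alpha> k - {0}" for w
  proof -
    obtain c where c: "w = (\<Sum>j<k. c j *s ?g j)"
      using w code_repr[OF inj k2 kn] by auto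
    have wi: "w $ i = poly (Pc k c) (\<alpha> i)" for i using c comb_component by metis
    have "Pc k c \<noteq> 0"
    proof
      assume "Pc k c = 0"
      then have "w = 0" by (simp add: vec_eq_iff wi)
      with w show False by simp
    qed
    from roots_bound[OF inj this k2] have Z: "card {i. w $ i = 0} \<le> k + 1" by (simp add: wi)
    have "{i. w $ i \<noteq> 0} = UNIV - {i. w $ i = 0}" by auto
    then have "card {i. w $ i \<noteq> 0} = n - card {i. w $ i = 0}"
      using assms(2) by (simp add: card_Diff_subset)
    then show ?thesis using Z unfolding hamming_weight_def by linarith
  qed
  obtain w0 where w0: "w0 \<in> code_C \<alpha> k - {0}" "hamming_weight w0 \<le> CARD('n) - k + 1"
    using singleton_part[OF inj k2 kn dimk] by blast
  have fin: "finite (hamming_weight ` (code_C \<alpha> k - {0}))" by simp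
  have ne: "hamming_weight ` (code_C \<alpha> k - {0}) \<noteq> {}" using w0 by auto
  have m1: "n - k - 1 \<le> min_distance (code_C \<alpha> k)"
    unfolding min_distance_def using lower by (simp add: Min_ge_iff[OF fin ne])
  have m2: "min_distance (code_C \<alpha> k) \<le> n - k + 1"
    unfolding min_distance_def using w0 assms(2) by (intro Min.coboundedI[OF fin, THEN order.trans]) auto
  have "min_distance (code_C \<alpha> k) \<in> {n - k - 1, n - k, n - k + 1}"
    using m1 m2 kn assms(2) by auto
  with dimC show ?thesis by simp
qed

end
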